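(* For positive integers $N$ and $M\le N$, for $n\in\{1,\dots,M-1\}$ and $l\in\{1,\dots,M-1-n\}$ let $$c_M(n,l;t)=\prod_{j=1}^n\left|\frac{(1-t^{M-l-j})(1-t^{l+j})}{1-t^j}\right|.$$ For each $M$ let $(n_M,l_M)$ be a pair in this range at which $c_M(n,l;e^{\frac{2\pi i}{N+1/2}})$ attains its maximum. Assume $\frac{M}{N+\frac12}\to s\in[0,1]$, $\frac{n_M}{N+\frac12}\to n_s$ and $\frac{l_M}{N+\frac12}\to l_s$ as $N\to\infty$. Then $$\lim_{N\to\infty}\frac{1}{N+\frac12}\log c_M\big(n_M,l_M;e^{\frac{2\pi i}{N+1/2}}\big)\le\frac{\mathrm{Vol}(\mathbb{S}^3\setminus WL)}{2\pi},$$ with equality if and only if $s=1$, $n_s=\tfrac12$ and $l_s=\tfrac14$.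
   Context: $WL$ denotes the Whitehead link; $\mathrm{Vol}(\mathbb{S}^3\setminus WL)=v_8=8\Lambda(\pi/4)$ is its hyperbolic volume, where $\Lambda(\theta)=-\int_0^\theta\log|2\sin t|\,dt$ is the Lobachevsky function and $v_8$ is the volume of the regular ideal octahedron. *)

theory Defs
  imports "HOL-Analysis.Analysis"
begin

definition lobachevsky :: "real \<Rightarrow> real" where
  "lobachevsky \<theta> = - integral {0..\<theta>} (\<lambda>t. ln \<bar>2 * sin t\<bar>)"

text \<open>Hyperbolic volume of the Whitehead link complement: v8 = 8 Lambda(pi/4).\<close>
definition vol_WL :: real where
  "vol_WL = 8 * lobachevsky (pi / 4)"

definition cM :: "nat \<Rightarrow> nat \<Rightarrow> nat \<Rightarrow> complex \<Rightarrow> real" where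
  "cM M n l t = (\<Prod>j=1..n. norm ((1 - t ^ (M - l - j)) * (1 - t ^ (l + j)) / (1 - t ^ j)))"

definition qN :: "nat \<Rightarrow> complex" where
  "qN N = exp (2 * of_real pi * \<i> / of_real (real N + 1/2))"

definition admissible :: "nat \<Rightarrow> nat \<Rightarrow> nat \<Rightarrow> bool" where
  "admissible M n l \<longleftrightarrow> 1 \<le> n \<and> n \<le> M - 1 \<and> 1 \<le> l \<and> l + n + 1 \<le> M"

end

theory Submission
  imports Defs "HOL-Real_Asymp.Real_Asymp"
begin


definition gg :: "real \<Rightarrow> real" where "gg x = ln \<bar>2 * sin (pi * x)\<bar>"

lemma sin_lower: assumes "0 \<le> y" "y \<le> pi/2" shows "y/3 \<le> sin y"
proof (cases "y \<le> 1")
  case True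
  have "\<bar>sin y - (\<Sum>m<3. sin_coeff m * y ^ m)\<bar> \<le> inverse (fact 3) * \<bar>y\<bar> ^ 3"
    by (rule Maclaurin_sin_bound)
  moreover have "(\<Sum>m<3. sin_coeff m * y ^ m) = y"
    by (simp add: numeral_3_eq_3 sin_coeff_def)
  moreover have "y^3 \<le> y"
  proof -
    have "y*y \<le> 1" using True assms by (simp add: mult_le_one)
    then have "y*y*y \<le> 1*y" using assms by (intro mult_right_mono) auto
    then show ?thesis by (simp add: power3_eq_cube)
  qed
  ultimately show ?thesis using assms by (auto simp: fact_numeral abs_if split: if_splits)
next
  case False
  have "sin 1 \<le> sin y" using False assms by (intro sin_monotone_2pi_le) auto
  moreover have "5/6 \<le> sin (1::real)"
  proof -
    have "\<bar>sin 1 - (\<Sum>m<3. sin_coeff m * (1::real) ^ m)\<bar> \<le> inverse (fact 3) * \<bar>1\<bar> ^ 3"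
      by (rule Maclaurin_sin_bound)
    moreover have "(\<Sum>m<3. sin_coeff m * (1::real) ^ m) = 1"
      by (simp add: numeral_3_eq_3 sin_coeff_def)
    ultimately show ?thesis by (auto simp: fact_numeral)
  qed
  moreover have "y/3 \<le> 2/3" using False assms pi_half_less_two by simp
  ultimately show ?thesis by linarith
qed

lemma sin_pi_pos: "0 < x \<Longrightarrow> x < 1 \<Longrightarrow> 0 < sin (pi * x)"
  by (intro sin_gt_zero) auto

lemma gg_eq: "0 < x \<Longrightarrow> x < 1 \<Longrightarrow> gg x = ln (2 * sin (pi * x))"
  using sin_pi_pos[of x] by (simp add: gg_def)

lemma gg_sym: "gg (1 - x) = gg x"
proof -
  have "sin (pi * (1 - x)) = sin (pi * x)"
    by (simp add: right_diff_distrib sin_diff)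
  then show ?thesis by (simp add: gg_def)
qed

lemma gg_le: "gg x \<le> ln 2"
proof (cases "sin (pi * x) = 0")
  case True then show ?thesis by (simp add: gg_def)
next
  case False
  then have "0 < \<bar>2 * sin (pi * x)\<bar>" by simp
  moreover have "\<bar>2 * sin (pi * x)\<bar> \<le> 2" using abs_sin_le_one[of "pi*x"] by (simp add: abs_mult)
  ultimately show ?thesis unfolding gg_def by (simp)
qed

lemma sin_pi_lower: assumes "0 \<le> x" "x \<le> 1/2" shows "2*x/3 \<le> sin (pi * x)"
proof -
  have "pi * x / 3 \<le> sin (pi * x)" using assms by (intro sin_lower) auto
  moreover have "2 * x \<le> pi * x" using assms pi_ge_two by (intro mult_right_mono) auto
  ultimately show ?thesis by linarith
qed

lemma sin_pi_lower2: assumes "0 < x" "x < 1" shows "x * (1 - x) \<le> 2 * sin (pi * x)"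
proof (cases "x \<le> 1/2")
  case True
  have "x * (1-x) \<le> x" using assms by (simp add: mult_le_cancel_left1)
  then show ?thesis using sin_pi_lower[of x] True assms by linarith
next
  case False
  have "x * (1-x) \<le> 1 - x" using assms by (simp add: mult_le_cancel_right1)
  moreover have "2*(1-x)/3 \<le> sin (pi * (1-x))" using False assms by (intro sin_pi_lower) auto
  moreover have "sin (pi * (1 - x)) = sin (pi * x)"
    by (simp add: right_diff_distrib sin_diff)
  ultimately show ?thesis using assms by (simp add: algebra_simps)
qed

lemma gg_lower: assumes "0 < x" "x < 1" shows "ln x + ln (1 - x) \<le> gg x"
proof -
  have "ln x + ln (1 - x) = ln (x * (1-x))" using assms by (simp add: ln_mult)
  also have "\<dots> \<le> ln (2 * sin (pi * x))" using assms sin_pi_lower2[OF assms] sin_pi_pos[OF assms]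
    by (subst ln_le_cancel_iff) auto
  finally show ?thesis using gg_eq assms by simp
qed

lemma gg_mono_inc: assumes "0 < x" "x \<le> y" "y \<le> 1/2" shows "gg x \<le> gg y"
proof -
  have "sin (pi * x) \<le> sin (pi * y)" using assms
    by (intro sin_monotone_2pi_le) (auto simp: mult_left_mono intro: order.trans[of _ 0])
  then show ?thesis using assms gg_eq[of x] gg_eq[of y] sin_pi_pos[of x] by auto
qed

lemma gg_mono_dec: assumes "1/2 \<le> x" "x \<le> y" "y < 1" shows "gg y \<le> gg x"
  using gg_mono_inc[of "1-y" "1-x"] assms gg_sym[of x] gg_sym[of y] by auto

lemma gg_cont: "continuous_on {0<..<1} gg"
proof -
  have "continuous_on {0<..<1} (\<lambda>x. ln (2 * sin (pi * x)))"
    using sin_pi_pos by (intro continuous_intros) force+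
  then show ?thesis by (rule continuous_on_cong[THEN iffD1, rotated 2]) (auto simp: gg_eq dest: sin_pi_pos)
qed



lemma neg_ln_le: assumes "0 < (x::real)" shows "- ln x \<le> 2 * x powr (-(1/2))"
proof -
  have "ln (x powr (-(1/2))) \<le> x powr (-(1/2)) - 1" using assms by (intro ln_le_minus_one) auto
  then show ?thesis using assms by simp
qed

lemma gg_abs_bound: assumes "0 < x" "x < 1"
  shows "\<bar>gg x\<bar> \<le> ln 2 + 2 * x powr (-(1/2)) + 2 * (1 - x) powr (-(1/2))"
proof -
  have a: "ln x \<le> 0" "ln (1-x) \<le> 0" using assms by auto
  have "ln x + ln (1 - x) \<le> gg x" by (rule gg_lower[OF assms])
  moreover note gg_le[of x]
  moreover have "- ln x \<le> 2 * x powr (-(1/2))" using assms by (intro neg_ln_le) auto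
  moreover have "- ln (1-x) \<le> 2 * (1-x) powr (-(1/2))" using assms by (intro neg_ln_le) auto
  moreover have "0 \<le> ln (2::real)" by simp
  moreover have "0 \<le> x powr (-(1/2))" "0 \<le> (1-x) powr (-(1/2))" by auto
  ultimately show ?thesis using a unfolding abs_le_iff by linarith
qed

lemma gg_integrable01: "gg integrable_on {0..1}"
proof -
  have i1: "(\<lambda>x::real. x powr (-(1/2))) integrable_on {0..1}"
    by (rule integrable_on_powr_from_0) auto
  then have "(\<lambda>x::real. x powr (-(1/2))) integrable_on (cbox 0 1)" by simp
  from integrable_affinity[OF this, of "-1" 1]
  have i2: "(\<lambda>x::real. (1 - x) powr (-(1/2))) integrable_on {0..1}" by simp
  have i3: "(\<lambda>x. ln 2 + 2 * x powr (-(1/2)) + 2 * (1 - x) powr (-(1/2))) integrable_on {0..1::real}"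
    by (intro integrable_add integrable_mult_right) (use i1 i2 in \<open>simp_all add: integrable_const_ivl\<close>)
  have i4: "(\<lambda>x. ln 2 + 2 * x powr (-(1/2)) + 2 * (1 - x) powr (-(1/2))) integrable_on {0<..<1::real}"
    by (rule integrable_spike_set[OF i3]) (auto intro: negligible_subset[of "{0,1}"])
  have "gg integrable_on {0<..<1}"
    by (rule measurable_bounded_by_integrable_imp_integrable_real[OF _ i4])
       (auto intro: continuous_imp_measurable_on_sets_lebesgue gg_cont gg_abs_bound)
  then show ?thesis
    by (rule integrable_spike_set) (auto intro: negligible_subset[of "{0,1}"])
qed

lemma gg_integrable: "0 \<le> a \<Longrightarrow> b \<le> 1 \<Longrightarrow> gg integrable_on {a..b}"
  by (rule integrable_on_subinterval[OF gg_integrable01]) auto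



definition GG :: "real \<Rightarrow> real" where "GG x = integral {0..x} gg"

lemma GG_0 [simp]: "GG 0 = 0" by (simp add: GG_def)

lemma GG_cont: "continuous_on {0..1} GG"
  unfolding GG_def by (rule indefinite_integral_continuous_1[OF gg_integrable01])

lemma GG_diff: assumes "0 \<le> a" "a \<le> b" "b \<le> 1" shows "GG b - GG a = integral {a..b} gg"
proof -
  have "integral {0..a} gg + integral {a..b} gg = integral {0..b} gg"
    by (rule Henstock_Kurzweil_Integration.integral_combine) (use assms in \<open>auto intro: gg_integrable\<close>)
  then show ?thesis by (simp add: GG_def)
qed

lemma GG_deriv: assumes "0 < y" "y < 1" shows "(GG has_real_derivative gg y) (at y)"
proof -
  have c: "continuous (at y within ({0..1} - {})) gg"
    using gg_cont assms by (simp add: continuous_on_eq_continuous_at continuous_at_imp_continuous_at_within)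
  have "((\<lambda>u. integral {0..u} gg) has_vector_derivative gg y) (at y within ({0..1} - {}))"
    by (rule integral_has_vector_derivative_continuous_at[OF gg_integrable01 _ _ c]) (use assms in auto)
  moreover have "at y within {0..1} = at y"
    by (rule at_within_interior) (use assms in auto)
  ultimately show ?thesis
    by (simp add: GG_def[abs_def] has_real_derivative_iff_has_vector_derivative)
qed

lemma gg_reflect: assumes "0 \<le> a" "a \<le> b" "b \<le> 1"
  shows "integral {1-b..1-a} gg = integral {a..b} gg"
proof -
  have "integral {1-b..1-a} gg = integral {1-b..1-a} (\<lambda>y. gg (1 - y))"
    by (simp add: gg_sym)
  also have "\<dots> = integral {(1-b)-1..(1-a)-1} (\<lambda>x. gg (1 - (x + 1)))"
    by (rule integral_shift_real_ivl[symmetric])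
  also have "\<dots> = integral {-b..-a} (\<lambda>x. gg (- x))" by simp
  also have "\<dots> = integral {a..b} gg" by simp
  finally show ?thesis .
qed

lemma img_div: assumes "0 < m" shows "(\<lambda>x::real. x / m) ` {a..b} = {a/m..b/m}"
proof
  show "(\<lambda>x. x / m) ` {a..b} \<subseteq> {a / m..b / m}" using assms by (auto simp: divide_right_mono)
  show "{a / m..b / m} \<subseteq> (\<lambda>x. x / m) ` {a..b}"
  proof
    fix y assume "y \<in> {a / m..b / m}"
    then have "m * y \<in> {a..b}" using assms by (auto simp: field_simps)
    moreover have "y = (m * y) / m" using assms by simp
    ultimately show "y \<in> (\<lambda>x. x / m) ` {a..b}" by blast
  qed
qed

lemma gg_double: assumes "0 < x" "x < 1/2" shows "gg (2 * x) = gg x + gg (x + 1/2)"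
proof -
  have s: "0 < sin (pi * x)" using assms by (intro sin_pi_pos) auto
  have c: "0 < cos (pi * x)" using assms by (intro cos_gt_zero_pi) (auto intro: order.strict_trans[of _ 0])
  have "gg (2 * x) = ln \<bar>2 * sin (2 * (pi * x))\<bar>" by (simp add: gg_def mult_ac)
  also have "\<dots> = ln \<bar>(2 * sin (pi * x)) * (2 * cos (pi * x))\<bar>" by (simp add: sin_double)
  also have "\<dots> = ln ((2 * sin (pi * x)) * (2 * cos (pi * x)))" using s c by simp
  also have "\<dots> = ln (2 * sin (pi * x)) + ln (2 * cos (pi * x))" using s c by (subst ln_mult) auto
  finally have e: "gg (2 * x) = ln (2 * sin (pi * x)) + ln (2 * cos (pi * x))" .
  have "gg (x + 1/2) = ln (2 * cos (pi * x))"
    using c by (simp add: gg_def distrib_left sin_add)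
  then show ?thesis using s e by (simp add: gg_def)
qed

lemma GG_1: "GG 1 = 0"
proof -
  have "integral ((\<lambda>x. x / 2) ` {0..1}) (\<lambda>x. gg (2 * x)) = (1 / \<bar>2\<bar>) *\<^sub>R integral {0..1} gg"
    by (rule integral_stretch_real) auto
  then have e1: "integral {0..1/2} (\<lambda>x. gg (2 * x)) = GG 1 / 2"
    by (simp add: img_div GG_def)
  have "integral {0..1/2} (\<lambda>x. gg (2 * x)) = integral {0..1/2} (\<lambda>x. gg x + gg (x + 1/2))"
    by (rule integral_spike[of "{0, 1/2}"]) (auto simp: gg_double)
  also have "\<dots> = integral {0..1/2} gg + integral {0..1/2} (\<lambda>x. gg (x + 1/2))"
  proof (rule integral_add)
    show "gg integrable_on {0..1/2}" by (rule gg_integrable) auto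
    have "(\<lambda>x. gg (x + 1/2)) integrable_on {1/2-1/2..1-1/2}"
      by (rule integrable_shift_real_ivl) (rule gg_integrable; auto)
    then show "(\<lambda>x. gg (x + 1/2)) integrable_on {0..1/2}" by simp
  qed
  also have "integral {0..1/2} (\<lambda>x. gg (x + 1/2)) = integral {1/2..1} gg"
    using integral_shift_real_ivl[of "1/2" "1/2" 1 gg] by simp
  also have "integral {1/2..1} gg = GG 1 - GG (1/2)" by (rule GG_diff[symmetric]) auto
  finally show ?thesis using e1 by (simp add: GG_def)
qed

lemma GG_half: "GG (1/2) = 0"
proof -
  have "integral {1-1/2..1-0} gg = integral {0..1/2} gg" by (rule gg_reflect) auto
  then have "GG 1 - GG (1/2) = GG (1/2)" using GG_diff[of "1/2" 1] by (simp add: GG_def)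
  then show ?thesis using GG_1 by simp
qed

lemma GG_34: "GG (3/4) = - GG (1/4)"
proof -
  have "integral {1-1/2..1-1/4} gg = integral {1/4..1/2} gg" by (rule gg_reflect) auto
  then have "GG (3/4) - GG (1/2) = GG (1/2) - GG (1/4)"
    using GG_diff[of "1/2" "3/4"] GG_diff[of "1/4" "1/2"] by simp
  then show ?thesis using GG_half by simp
qed

lemma vol_GG: "vol_WL / (2 * pi) = - 4 * GG (1/4)"
proof -
  have "integral ((\<lambda>x. x / pi) ` {0..pi/4}) (\<lambda>x. ln \<bar>2 * sin (pi * x)\<bar>)
        = (1 / \<bar>pi\<bar>) *\<^sub>R integral {0..pi/4} (\<lambda>t. ln \<bar>2 * sin t\<bar>)"
    by (rule integral_stretch_real[where f = "\<lambda>t. ln \<bar>2 * sin t\<bar>"]) auto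
  then have "GG (1/4) = integral {0..pi/4} (\<lambda>t. ln \<bar>2 * sin t\<bar>) / pi"
    by (simp add: img_div GG_def gg_def[abs_def])
  then show ?thesis by (simp add: vol_WL_def lobachevsky_def)
qed



definition phi :: "real \<Rightarrow> real \<Rightarrow> real" where "phi n x = GG (x + n) - GG x"
definition HH :: "real \<Rightarrow> real" where "HH n = 2 * (GG ((1+n)/2) - GG ((1-n)/2)) - GG n"

lemma GG_cont_comp: assumes "continuous_on S f" "\<And>x. x \<in> S \<Longrightarrow> f x \<in> {0..1}"
  shows "continuous_on S (\<lambda>x. GG (f x))"
  by (rule continuous_on_compose2[OF GG_cont assms(1)]) (use assms(2) in auto)

lemma gg_shift_sign:
  assumes "0 < n" "n < 1" "0 < y" "y + n < 1"
  shows "y < (1-n)/2 \<Longrightarrow> gg y < gg (y + n)" and "y > (1-n)/2 \<Longrightarrow> gg (y + n) < gg y"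
proof -
  have d: "sin (pi * (y + n)) - sin (pi * y) = 2 * sin (pi * n / 2) * cos (pi * (y + n/2))"
    by (simp add: sin_diff_sin algebra_simps add_divide_distrib)
  have sn: "0 < sin (pi * n / 2)" using assms by (intro sin_gt_zero) auto
  have p1: "0 < sin (pi * y)" using assms by (intro sin_pi_pos) auto
  have p2: "0 < sin (pi * (y + n))" using assms by (intro sin_pi_pos) auto
  {
    assume "y < (1-n)/2"
    then have a2: "pi * (y + n/2) < pi * (1/2)" using assms by (intro mult_strict_left_mono) auto
    have a1: "0 < pi * (y + n/2)" using assms by simp
    have a3: "-(pi/2) < pi * (y + n/2)" using a1 pi_gt_zero by linarith
    have "0 < cos (pi * (y + n/2))" using a3 a2 by (intro cos_gt_zero_pi) auto
    then have "sin (pi * y) < sin (pi * (y + n))" using d sn by (smt (verit) mult_pos_pos)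
    then show "gg y < gg (y + n)" using p1 p2 assms by (simp add: gg_eq)
  }
  {
    assume a: "y > (1-n)/2"
    have b1: "pi * (1/2) < pi * (y + n/2)" using assms a by (intro mult_strict_left_mono) auto
    have b2: "pi * (y + n/2) \<le> pi * 1" using assms by (intro mult_left_mono) auto
    have "cos (pi * (y + n/2)) < cos (pi/2)" using b1 b2
      by (intro cos_monotone_0_pi) auto
    then have "cos (pi * (y + n/2)) < 0" by simp
    then have "sin (pi * (y + n)) < sin (pi * y)" using d sn by (smt (verit) mult_pos_neg)
    then show "gg (y + n) < gg y" using p1 p2 assms by (simp add: gg_eq)
  }
qed

lemma phi_deriv: assumes "0 < y" "0 < y + n" "y + n < 1" "y < 1"
  shows "(phi n has_real_derivative (gg (y + n) - gg y)) (at y)"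
proof -
  have "((\<lambda>x. GG (x + n)) has_real_derivative gg (y + n) * 1) (at y)"
    by (rule DERIV_chain2[OF GG_deriv]) (use assms in \<open>auto intro!: derivative_eq_intros\<close>)
  then show ?thesis unfolding phi_def[abs_def]
    using GG_deriv[of y] assms by (auto intro!: derivative_eq_intros)
qed

lemma phi_cont: assumes "0 \<le> a" "b + n \<le> 1" "0 \<le> n" shows "continuous_on {a..b} (phi n)"
  unfolding phi_def[abs_def] using assms
  by (intro continuous_intros GG_cont_comp) auto

lemma phi_max:
  assumes "0 \<le> n" "n \<le> 1" "0 \<le> x" "x \<le> 1 - n"
  shows "phi n x \<le> phi n ((1-n)/2)"
    and "0 < n \<Longrightarrow> n < 1 \<Longrightarrow> x \<noteq> (1-n)/2 \<Longrightarrow> phi n x < phi n ((1-n)/2)"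
proof -
  have strict: "phi n x < phi n ((1-n)/2)" if h: "0 < n" "n < 1" "x \<noteq> (1-n)/2"
  proof (cases "x < (1-n)/2")
    case True
    show ?thesis
    proof (rule DERIV_pos_imp_increasing_open[OF True])
      fix y assume y: "x < y" "y < (1-n)/2"
      show "\<exists>d. DERIV (phi n) y :> d \<and> 0 < d"
        using y h assms phi_deriv[of y n] gg_shift_sign(1)[of n y] by auto
    next
      show "continuous_on {x..(1-n)/2} (phi n)" by (rule phi_cont) (use assms h in \<open>auto simp: field_simps\<close>)
    qed
  next
    case False
    then have F: "(1-n)/2 < x" using h by auto
    show ?thesis
    proof (rule DERIV_neg_imp_decreasing_open[OF F])
      fix y assume y: "(1-n)/2 < y" "y < x"
      show "\<exists>d. DERIV (phi n) y :> d \<and> d < 0"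
        using y h assms phi_deriv[of y n] gg_shift_sign(2)[of n y] by auto
    next
      show "continuous_on {(1-n)/2..x} (phi n)" by (rule phi_cont) (use assms h in \<open>auto simp: field_simps\<close>)
    qed
  qed
  then show "0 < n \<Longrightarrow> n < 1 \<Longrightarrow> x \<noteq> (1-n)/2 \<Longrightarrow> phi n x < phi n ((1-n)/2)" by blast
  show "phi n x \<le> phi n ((1-n)/2)"
  proof (cases "n = 0 \<or> n = 1")
    case True
    then show ?thesis using assms by (auto simp: phi_def)
  next
    case False
    then show ?thesis using strict assms by fastforce
  qed
qed

lemma HH_deriv: assumes "0 < n" "n < 1"
  shows "(HH has_real_derivative (gg ((1+n)/2) + gg ((1-n)/2) - gg n)) (at n)"
proof -
  have d1: "((\<lambda>x. GG ((1+x)/2)) has_real_derivative gg ((1+n)/2) * (1/2)) (at n)"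
    by (rule DERIV_chain2[OF GG_deriv]) (use assms in \<open>auto intro!: derivative_eq_intros\<close>)
  have d2: "((\<lambda>x. GG ((1-x)/2)) has_real_derivative gg ((1-n)/2) * (-1/2)) (at n)"
    by (rule DERIV_chain2[OF GG_deriv]) (use assms in \<open>auto intro!: derivative_eq_intros\<close>)
  have d3: "(GG has_real_derivative gg n) (at n)" by (rule GG_deriv) (use assms in auto)
  show ?thesis unfolding HH_def[abs_def]
    by (rule derivative_eq_intros d1 d2 d3 | simp)+
qed

lemma HH_deriv_sign: assumes "0 < n" "n < 1"
  shows "n < 1/2 \<Longrightarrow> 0 < gg ((1+n)/2) + gg ((1-n)/2) - gg n"
    and "n > 1/2 \<Longrightarrow> gg ((1+n)/2) + gg ((1-n)/2) - gg n < 0"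
proof -
  define z where "z = pi * n / 2"
  have z: "0 < z" "z < pi/2" using assms by (auto simp: z_def)
  have c: "0 < cos z" using z by (intro cos_gt_zero_pi) auto
  have s: "0 < sin z" using z by (intro sin_gt_zero) auto
  have e1: "gg ((1+n)/2) = ln (2 * cos z)"
    using c by (simp add: gg_def z_def add_divide_distrib distrib_left sin_add)
  have e2: "gg ((1-n)/2) = ln (2 * cos z)"
    using c by (simp add: gg_def z_def diff_divide_distrib right_diff_distrib sin_diff)
  have "gg n = ln \<bar>2 * sin (2 * z)\<bar>" by (simp add: gg_def z_def)
  also have "\<dots> = ln ((2 * sin z) * (2 * cos z))" using s c by (simp add: sin_double)
  also have "\<dots> = ln (2 * sin z) + ln (2 * cos z)" using s c by (subst ln_mult) auto
  finally have e3: "gg n = ln (2 * sin z) + ln (2 * cos z)" .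
  have sc: "sin z = cos (pi/2 - z)" by (simp add: cos_diff)
  {
    assume "n < 1/2"
    then have "z < pi/2 - z" by (auto simp: z_def)
    then have "cos (pi/2 - z) < cos z" using z by (intro cos_monotone_0_pi) auto
    then have "ln (2 * sin z) < ln (2 * cos z)" using s sc by simp
    then show "0 < gg ((1+n)/2) + gg ((1-n)/2) - gg n" using e1 e2 e3 by simp
  }
  {
    assume "n > 1/2"
    then have "pi/2 - z < z" by (auto simp: z_def)
    then have "cos z < cos (pi/2 - z)" using z by (intro cos_monotone_0_pi) auto
    then have "ln (2 * cos z) < ln (2 * sin z)" using c sc by simp
    then show "gg ((1+n)/2) + gg ((1-n)/2) - gg n < 0" using e1 e2 e3 by simp
  }
qed

lemma HH_cont: assumes "0 \<le> a" "b \<le> 1" shows "continuous_on {a..b} HH"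
  unfolding HH_def[abs_def] using assms
  by (intro continuous_intros GG_cont_comp) auto

lemma HH_max: assumes "0 \<le> n" "n \<le> 1"
  shows "HH n \<le> HH (1/2)" and "n \<noteq> 1/2 \<Longrightarrow> HH n < HH (1/2)"
proof -
  show s: "HH n < HH (1/2)" if h: "n \<noteq> 1/2"
  proof (cases "n < 1/2")
    case True
    show ?thesis
    proof (rule DERIV_pos_imp_increasing_open[OF True])
      fix y assume y: "n < y" "y < 1/2"
      show "\<exists>d. DERIV HH y :> d \<and> 0 < d"
        using y assms HH_deriv[of y] HH_deriv_sign(1)[of y] by auto
    next
      show "continuous_on {n..1/2} HH" using assms by (intro HH_cont) auto
    qed
  next
    case False
    then have F: "1/2 < n" using h by auto
    show ?thesis
    proof (rule DERIV_neg_imp_decreasing_open[OF F])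
      fix y assume y: "1/2 < y" "y < n"
      show "\<exists>d. DERIV HH y :> d \<and> d < 0"
        using y assms HH_deriv[of y] HH_deriv_sign(2)[of y] by auto
    next
      show "continuous_on {1/2..n} HH" using assms by (intro HH_cont) auto
    qed
  qed
  show "HH n \<le> HH (1/2)"
  proof (cases "n = 1/2")
    case True then show ?thesis by (simp only: True order_refl)
  next
    case False then show ?thesis using s by fastforce
  qed
qed

lemma HH_half: "HH (1/2) = vol_WL / (2 * pi)"
  by (simp add: HH_def vol_GG GG_34 GG_half)

lemma F_bound:
  assumes "0 \<le> u" "0 \<le> n" "0 \<le> l" "u + n + l \<le> 1"
  shows "GG (u+n) - GG u + GG (l+n) - GG l - GG n \<le> vol_WL / (2 * pi)"
    and "GG (u+n) - GG u + GG (l+n) - GG l - GG n = vol_WL / (2 * pi) \<longleftrightarrow> u = 1/4 \<and> n = 1/2 \<and> l = 1/4"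
proof -
  let ?F = "GG (u+n) - GG u + GG (l+n) - GG l - GG n"
  have F: "?F = phi n u + phi n l - GG n" by (simp add: phi_def)
  have e: "(1-n)/2 + n = (1+n)/2" by (simp add: field_simps)
  have H: "HH n = 2 * phi n ((1-n)/2) - GG n" by (simp only: HH_def phi_def e)
  have pu: "phi n u \<le> phi n ((1-n)/2)" using assms by (intro phi_max(1)) auto
  have pl: "phi n l \<le> phi n ((1-n)/2)" using assms by (intro phi_max(1)) auto
  have hm: "HH n \<le> HH (1/2)" using assms by (intro HH_max(1)) auto
  show "?F \<le> vol_WL / (2 * pi)" using F H pu pl hm HH_half by linarith
  show "?F = vol_WL / (2 * pi) \<longleftrightarrow> u = 1/4 \<and> n = 1/2 \<and> l = 1/4"
  proof
    assume eq: "?F = vol_WL / (2 * pi)"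
    have n: "n = 1/2"
    proof (rule ccontr)
      assume "n \<noteq> 1/2"
      then have "HH n < HH (1/2)" using assms by (intro HH_max(2)) auto
      then show False using eq F H pu pl HH_half by linarith
    qed
    have u: "u = 1/4"
    proof (rule ccontr)
      assume "u \<noteq> 1/4"
      then have "phi n u < phi n ((1-n)/2)" using assms n by (intro phi_max(2)) auto
      then show False using eq F H pl hm HH_half by linarith
    qed
    have l: "l = 1/4"
    proof (rule ccontr)
      assume "l \<noteq> 1/4"
      then have "phi n l < phi n ((1-n)/2)" using assms n by (intro phi_max(2)) auto
      then show False using eq F H pu hm HH_half by linarith
    qed
    show "u = 1/4 \<and> n = 1/2 \<and> l = 1/4" using n u l by simp
  next
    assume A: "u = 1/4 \<and> n = 1/2 \<and> l = 1/4"
    then have u: "u = 1/4" and n: "n = 1/2" and l: "l = 1/4" by auto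
    have "?F = 2 * GG (3/4) - 2 * GG (1/4) - GG (1/2)" unfolding u n l by simp
    then show "?F = vol_WL / (2 * pi)" using HH_half by (simp add: HH_def)
  qed
qed



definition hh :: "nat \<Rightarrow> real" where "hh N = 1 / (real N + 1/2)"
definition PP :: "nat \<Rightarrow> nat \<Rightarrow> real" where "PP N b = (\<Sum>k=1..b. gg (real k * hh N))"
definition TT :: "nat \<Rightarrow> nat \<Rightarrow> real" where "TT N b = hh N * PP N b - GG (real b * hh N)"
definition BB :: "nat \<Rightarrow> real" where "BB N = ln 2 + 2 * ln (real N + 1/2)"

lemma hh_pos: "0 < hh N" by (simp add: hh_def)

lemma hh_le1: "1 \<le> N \<Longrightarrow> hh N \<le> 1" by (simp add: hh_def)

lemma grid_le1: assumes "k \<le> N" shows "real k * hh N \<le> 1 - hh N / 2"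
proof -
  have "real k * hh N \<le> real N * hh N" using assms hh_pos[of N] by (intro mult_right_mono) auto
  also have "real N * hh N = 1 - hh N / 2" by (simp add: hh_def field_simps)
  finally show ?thesis .
qed

lemma grid_lt1: "k \<le> N \<Longrightarrow> real k * hh N < 1"
  using grid_le1[of k N] hh_pos[of N] by linarith

lemma grid_mono: "j \<le> k \<Longrightarrow> real j * hh N \<le> real k * hh N"
  using hh_pos[of N] by (intro mult_right_mono) auto

lemma BB_ge: "1 \<le> N \<Longrightarrow> ln 2 \<le> BB N"
  by (simp add: BB_def)

lemma grid_bound: assumes "1 \<le> k" "k \<le> N" shows "\<bar>gg (real k * hh N)\<bar> \<le> BB N"
proof -
  let ?h = "hh N" and ?x = "real k * hh N"
  have h0: "0 < ?h" by (rule hh_pos)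
  have x1: "?h \<le> ?x" using assms h0 by (simp add: mult_le_cancel_right1)
  have x2: "?x \<le> 1 - ?h/2" using grid_le1[OF assms(2)] .
  have "ln ?x + ln (1 - ?x) \<le> gg ?x" using x1 x2 h0 by (intro gg_lower) auto
  moreover have "ln ?h \<le> ln ?x" using x1 h0 by simp
  moreover have "ln (?h/2) \<le> ln (1 - ?x)" using x2 h0 by simp
  moreover have "ln (?h/2) = ln ?h - ln 2" using h0 by (simp add: ln_div)
  moreover have "ln ?h = - ln (real N + 1/2)" by (simp add: hh_def ln_div)
  moreover note gg_le[of ?x]
  moreover have "0 \<le> ln (real N + 1/2)" using assms by simp
  ultimately show ?thesis unfolding BB_def abs_le_iff by linarith
qed

lemma TT_step: "TT N (Suc k) - TT N k = hh N * gg (real (Suc k) * hh N) - (GG (real (Suc k) * hh N) - GG (real k * hh N))"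
  by (simp add: TT_def PP_def algebra_simps)

lemma int_bounds: assumes "0 \<le> a" "a \<le> b" "b \<le> 1" "\<And>x. x \<in> {a..b} \<Longrightarrow> lo \<le> gg x \<and> gg x \<le> hi"
  shows "(b - a) * lo \<le> GG b - GG a" "GG b - GG a \<le> (b - a) * hi"
proof -
  have i: "gg integrable_on {a..b}" using assms by (intro gg_integrable) auto
  have "integral {a..b} (\<lambda>x. lo) \<le> integral {a..b} gg"
    by (rule integral_le[OF _ i]) (use assms in auto)
  then show "(b - a) * lo \<le> GG b - GG a" using assms GG_diff[of a b] by simp
  have "integral {a..b} gg \<le> integral {a..b} (\<lambda>x. hi)"
    by (rule integral_le[OF i]) (use assms in auto)
  then show "GG b - GG a \<le> (b - a) * hi" using assms GG_diff[of a b] by simp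
qed

lemma cell_len: "real (Suc n) * hh N - real n * hh N = hh N"
  by (simp add: algebra_simps)

lemma inc_cell: assumes "1 \<le> n" "real (Suc n) * hh N \<le> 1/2"
  shows "0 \<le> TT N (Suc n) - TT N n"
    "TT N (Suc n) - TT N n \<le> hh N * (gg (real (Suc n) * hh N) - gg (real n * hh N))"
proof -
  let ?a = "real n * hh N" and ?b = "real (Suc n) * hh N"
  have a0: "0 < ?a" using assms hh_pos[of N] by simp
  have ab: "?a \<le> ?b" by (rule grid_mono) auto
  have b: "\<And>x. x \<in> {?a..?b} \<Longrightarrow> gg ?a \<le> gg x \<and> gg x \<le> gg ?b"
    using a0 assms by (auto intro!: gg_mono_inc)
  have L: "?b - ?a = hh N" by (simp add: algebra_simps)
  note ib = int_bounds[of ?a ?b "gg ?a" "gg ?b", OF _ ab _ b, unfolded L]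
  show "0 \<le> TT N (Suc n) - TT N n" using ib(2) a0 assms by (simp add: TT_step)
  show "TT N (Suc n) - TT N n \<le> hh N * (gg ?b - gg ?a)"
    using ib(1) a0 assms by (simp add: TT_step algebra_simps)
qed

lemma dec_cell: assumes "1/2 \<le> real n * hh N" "Suc n \<le> N"
  shows "TT N (Suc n) - TT N n \<le> 0"
    "hh N * (gg (real (Suc n) * hh N) - gg (real n * hh N)) \<le> TT N (Suc n) - TT N n"
proof -
  let ?a = "real n * hh N" and ?b = "real (Suc n) * hh N"
  have ab: "?a \<le> ?b" by (rule grid_mono) auto
  have b1: "?b < 1" by (rule grid_lt1[OF assms(2)])
  have b: "\<And>x. x \<in> {?a..?b} \<Longrightarrow> gg ?b \<le> gg x \<and> gg x \<le> gg ?a"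
    using b1 assms by (auto intro!: gg_mono_dec)
  have L: "?b - ?a = hh N" by (simp add: algebra_simps)
  note ib = int_bounds[of ?a ?b "gg ?b" "gg ?a", OF _ ab _ b, unfolded L]
  show "TT N (Suc n) - TT N n \<le> 0" using ib(1) b1 assms by (simp add: TT_step)
  show "hh N * (gg ?b - gg ?a) \<le> TT N (Suc n) - TT N n"
    using ib(2) b1 assms by (simp add: TT_step algebra_simps)
qed

lemma inc_run: assumes "1 \<le> p" "p \<le> q" "real q * hh N \<le> 1/2"
  shows "0 \<le> TT N q - TT N p \<and> TT N q - TT N p \<le> hh N * (gg (real q * hh N) - gg (real p * hh N))"
  using assms(2,3)
proof (induction q rule: dec_induct)
  case base then show ?case by simp
next
  case (step n)
  have s: "real (Suc n) * hh N \<le> 1/2" using step.prems .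
  have "real n * hh N \<le> real (Suc n) * hh N" by (rule grid_mono) auto
  then have IH: "0 \<le> TT N n - TT N p \<and> TT N n - TT N p \<le> hh N * (gg (real n * hh N) - gg (real p * hh N))"
    using step.IH s by linarith
  have c: "0 \<le> TT N (Suc n) - TT N n"
    "TT N (Suc n) - TT N n \<le> hh N * (gg (real (Suc n) * hh N) - gg (real n * hh N))"
    using inc_cell[of n N] step.hyps assms(1) s by auto
  show ?case using IH c by (simp add: algebra_simps)
qed

lemma dec_run: assumes "1/2 \<le> real p * hh N" "p \<le> q" "q \<le> N"
  shows "hh N * (gg (real q * hh N) - gg (real p * hh N)) \<le> TT N q - TT N p \<and> TT N q - TT N p \<le> 0"
  using assms(2,3)
proof (induction q rule: dec_induct)
  case base then show ?case by simp
next
  case (step n)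
  have IH: "hh N * (gg (real n * hh N) - gg (real p * hh N)) \<le> TT N n - TT N p \<and> TT N n - TT N p \<le> 0"
    using step.IH step.prems by linarith
  have "real p * hh N \<le> real n * hh N" by (rule grid_mono) (use step.hyps in auto)
  then have c: "TT N (Suc n) - TT N n \<le> 0"
    "hh N * (gg (real (Suc n) * hh N) - gg (real n * hh N)) \<le> TT N (Suc n) - TT N n"
    using dec_cell[of n N] step.prems assms(1) by auto
  show ?case using IH c by (simp add: algebra_simps)
qed

lemma run_bound: assumes "1 \<le> p" "p \<le> q" "q \<le> N"
  and "real q * hh N \<le> 1/2 \<or> 1/2 \<le> real p * hh N"
  shows "\<bar>TT N q - TT N p\<bar> \<le> 2 * hh N * BB N"
proof -
  have gq: "\<bar>gg (real q * hh N)\<bar> \<le> BB N" using assms by (intro grid_bound) auto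
  have gp: "\<bar>gg (real p * hh N)\<bar> \<le> BB N" using assms by (intro grid_bound) auto
  have "\<bar>hh N * (gg (real q * hh N) - gg (real p * hh N))\<bar> \<le> hh N * (2 * BB N)"
    using gq gp hh_pos[of N] by (auto simp: abs_mult intro!: mult_left_mono)
  moreover have "(0 \<le> TT N q - TT N p \<and> TT N q - TT N p \<le> hh N * (gg (real q * hh N) - gg (real p * hh N)))
     \<or> (hh N * (gg (real q * hh N) - gg (real p * hh N)) \<le> TT N q - TT N p \<and> TT N q - TT N p \<le> 0)"
    using assms inc_run[of p q N] dec_run[of p N q] by auto
  ultimately show ?thesis by (auto simp: abs_le_iff)
qed



lemma norm_one_minus_cis: "norm (1 - cis x) = 2 * \<bar>sin (x/2)\<bar>"
proof -
  have "norm (1 - cis x) = sqrt ((1 - cos x)^2 + (sin x)^2)"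
    by (simp add: norm_complex_def)
  also have "(1 - cos x)^2 + (sin x)^2 = 2 - 2 * cos x"
    using sin_cos_squared_add[of x] by (simp add: power2_eq_square algebra_simps)
  also have "cos x = 1 - 2 * (sin (x/2))^2"
    using cos_double_sin[of "x/2"] by simp
  also have "2 - 2 * (1 - 2 * (sin (x/2))^2) = (2 * sin (x/2))^2" by (simp add: power2_eq_square)
  also have "sqrt ((2 * sin (x/2))^2) = 2 * \<bar>sin (x/2)\<bar>" by (simp only: real_sqrt_abs abs_mult)
  finally show ?thesis .
qed

lemma qN_arg: "2 * complex_of_real pi * \<i> / complex_of_real (real N + 1/2) = \<i> * complex_of_real (2 * pi * hh N)"
proof -
  have "complex_of_real (2 * pi * hh N) = 2 * complex_of_real pi / complex_of_real (real N + 1/2)"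
    by (simp add: hh_def)
  then show ?thesis by simp
qed

lemma qN_pow: "qN N ^ k = cis (2 * pi * (real k * hh N))"
proof -
  have "qN N = cis (2 * pi * hh N)"
    unfolding qN_def qN_arg cis_conv_exp ..
  then have "qN N ^ k = cis (2 * pi * hh N) ^ k" by simp
  also have "\<dots> = cis (real k * (2 * pi * hh N))" by (rule Complex.DeMoivre)
  also have "real k * (2 * pi * hh N) = 2 * pi * (real k * hh N)" by simp
  finally show ?thesis .
qed

lemma norm_q: "norm (1 - qN N ^ k) = \<bar>2 * sin (pi * (real k * hh N))\<bar>"
  unfolding qN_pow norm_one_minus_cis by (simp add: abs_mult)

lemma ln_norm_q: "ln (norm (1 - qN N ^ k)) = gg (real k * hh N)"
  unfolding norm_q gg_def ..



lemma TT_0: "TT N 0 = 0" by (simp add: TT_def PP_def)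

lemma TT_bound: assumes "2 \<le> N" "b \<le> N"
  shows "\<bar>TT N b\<bar> \<le> 8 * hh N * BB N + \<bar>GG (hh N)\<bar>"
proof -
  define c where "c = N div 2"
  have c1: "1 \<le> c" "Suc c \<le> N" using assms unfolding c_def by linarith+
  have c2: "2 * c \<le> N" "N \<le> 2 * c + 1" unfolding c_def by linarith+
  have rc: "2 * real c \<le> real N" "real N \<le> 2 * real c + 1" using c2 by linarith+
  have ch: "real c * hh N \<le> 1/2" using rc by (simp add: hh_def field_simps)
  have ch2: "1/2 \<le> real (Suc c) * hh N" using rc by (simp add: hh_def field_simps)
  have N1: "1 \<le> N" using assms by simp
  have B0: "0 \<le> BB N" using BB_ge[OF N1] ln_ge_zero[of 2] by linarith
  have h0: "0 < hh N" by (rule hh_pos)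
  let ?e = "2 * hh N * BB N"
  have T1: "\<bar>TT N 1\<bar> \<le> hh N * BB N + \<bar>GG (hh N)\<bar>"
  proof -
    have "TT N 1 = hh N * gg (hh N) - GG (hh N)" by (simp add: TT_def PP_def)
    moreover have "\<bar>gg (real 1 * hh N)\<bar> \<le> BB N" using N1 by (intro grid_bound) auto
    then have "\<bar>hh N * gg (hh N)\<bar> \<le> hh N * BB N" using h0 by (simp add: abs_mult mult_left_mono)
    ultimately show ?thesis unfolding abs_le_iff by linarith
  qed
  have hB0: "0 \<le> hh N * BB N" using h0 B0 by simp
  have G0: "0 \<le> \<bar>GG (hh N)\<bar>" by simp
  note T1' = T1[unfolded abs_le_iff]
  have mid: "\<bar>TT N (Suc c) - TT N c\<bar> \<le> ?e"
  proof -
    let ?a = "real c * hh N" and ?b = "real (Suc c) * hh N"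
    have a0: "0 < ?a" using c1 h0 by simp
    have ab: "?a \<le> ?b" by (rule grid_mono) auto
    have b1: "?b < 1" by (rule grid_lt1[OF c1(2)])
    have ga: "\<bar>gg ?a\<bar> \<le> BB N" using c1 by (intro grid_bound) auto
    have gb: "\<bar>gg ?b\<bar> \<le> BB N" using c1 by (intro grid_bound) auto
    have bnd: "-BB N \<le> gg x \<and> gg x \<le> BB N" if x: "x \<in> {?a..?b}" for x
    proof -
      have "gg x \<le> BB N" using gg_le[of x] BB_ge[OF N1] by linarith
      moreover have "-BB N \<le> gg x"
      proof (cases "x \<le> 1/2")
        case True
        then have "gg ?a \<le> gg x" using x a0 by (intro gg_mono_inc) auto
        then show ?thesis using ga by linarith
      next
        case False
        then have "gg ?b \<le> gg x" using x b1 by (intro gg_mono_dec) auto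
        then show ?thesis using gb by linarith
      qed
      ultimately show ?thesis by simp
    qed
    have L: "?b - ?a = hh N" by (simp add: algebra_simps)
    note ib = int_bounds[of ?a ?b "-BB N" "BB N", OF _ ab _ bnd, unfolded L]
    have i1: "- (hh N * BB N) \<le> GG ?b - GG ?a" "GG ?b - GG ?a \<le> hh N * BB N"
      using ib a0 b1 by auto
    have "\<bar>hh N * gg ?b\<bar> \<le> hh N * BB N" using gb h0 by (simp add: abs_mult mult_left_mono)
    then show ?thesis using i1 unfolding TT_step by (simp add: abs_le_iff)
  qed
  show ?thesis
  proof (cases "b = 0")
    case True
    then show ?thesis using B0 h0 by (simp add: TT_0)
  next
    case False
    then have b1: "1 \<le> b" by simp
    show ?thesis
    proof (cases "b \<le> c")
      case True
      have "real b * hh N \<le> real c * hh N" using True by (rule grid_mono)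
      then have "\<bar>TT N b - TT N 1\<bar> \<le> ?e" using b1 assms ch by (intro run_bound) auto
      then show ?thesis using T1' hB0 G0 unfolding abs_le_iff by linarith
    next
      case False
      have r1: "\<bar>TT N c - TT N 1\<bar> \<le> ?e" using c1 ch by (intro run_bound) auto
      have r2: "\<bar>TT N b - TT N (Suc c)\<bar> \<le> ?e" using False assms ch2 by (intro run_bound) auto
      show ?thesis using T1' r1 r2 mid hB0 G0 unfolding abs_le_iff by linarith
    qed
  qed
qed

definition eta :: "nat \<Rightarrow> real" where "eta N = 8 * hh N * BB N + \<bar>GG (hh N)\<bar>"

lemma hh_lim: "hh \<longlonglongrightarrow> 0"
  unfolding hh_def by real_asymp

lemma eta_lim: "eta \<longlonglongrightarrow> 0"
proof -
  have l1: "(\<lambda>N. hh N * ln (real N + 1/2)) \<longlonglongrightarrow> 0"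
    unfolding hh_def by real_asymp
  have e: "8 * hh N * BB N = 8 * ln 2 * hh N + 16 * (hh N * ln (real N + 1/2))" for N
    by (simp add: BB_def algebra_simps)
  have a: "(\<lambda>N. 8 * hh N * BB N) \<longlonglongrightarrow> 0"
    unfolding e using tendsto_add[OF tendsto_mult_right_zero[OF hh_lim, of "8 * ln 2"] tendsto_mult_right_zero[OF l1, of 16]] by simp
  have "(\<lambda>N. GG (hh N)) \<longlonglongrightarrow> GG 0"
  proof (rule continuous_on_tendsto_compose[OF GG_cont hh_lim])
    show "(0::real) \<in> {0..1}" by simp
    show "\<forall>\<^sub>F N in sequentially. hh N \<in> {0..1}"
      using eventually_ge_at_top[of "1::nat"] by eventually_elim (auto intro: hh_le1 less_imp_le[OF hh_pos])
  qed
  then have "(\<lambda>N. \<bar>GG (hh N)\<bar>) \<longlonglongrightarrow> 0" by (simp add: tendsto_rabs_zero)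
  then show ?thesis unfolding eta_def[abs_def] using a by (intro tendsto_add_zero)
qed

lemma sum_rev_idx: fixes n c :: nat shows "n < c \<Longrightarrow> (\<Sum>j=1..n. f (c - j)) = (\<Sum>k=1..c-1. f k) - (\<Sum>k=1..c-1-n. (f k::real))"
proof (induction n)
  case 0 then show ?case by simp
next
  case (Suc n)
  have e: "c - 1 - n = Suc (c - 1 - Suc n)" using Suc.prems by simp
  have "(\<Sum>k=1..c-1-n. f k) = (\<Sum>k=1..c-1-Suc n. f k) + f (c - Suc n)"
  proof -
    define m where "m = c - 1 - Suc n"
    have e2: "c - 1 - n = Suc m" "c - Suc n = Suc m" using Suc.prems by (auto simp: m_def)
    have "(\<Sum>k=1..Suc m. f k) = (\<Sum>k=1..m. f k) + f (Suc m)" by simp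
    then show ?thesis unfolding e2 m_def[symmetric] .
  qed
  then show ?case using Suc by simp
qed

lemma sum_shift_idx: fixes n l :: nat shows "(\<Sum>j=1..n. f (l + j)) = (\<Sum>k=1..l+n. f k) - (\<Sum>k=1..l. (f k::real))"
proof (induction n)
  case 0 then show ?case by simp
next
  case (Suc n)
  then show ?case by (simp add: sum.cl_ivl_Suc)
qed

lemma norm_q_pos: "1 \<le> k \<Longrightarrow> k \<le> N \<Longrightarrow> 0 < norm (1 - qN N ^ k)"
  unfolding norm_q using sin_pi_pos[of "real k * hh N"] grid_lt1[of k N] hh_pos[of N] by auto

lemma ln_cM: assumes "admissible M n l" "M \<le> N"
  shows "ln (cM M n l (qN N)) = (PP N (M-l-1) - PP N (M-l-1-n)) + (PP N (l+n) - PP N l) - PP N n"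
proof -
  let ?f = "\<lambda>k. norm (1 - qN N ^ k)"
  have A: "l + n + 1 \<le> M" "1 \<le> n" "1 \<le> l" using assms(1) by (auto simp: admissible_def)
  have pos: "0 < ?f (M - l - j)" "0 < ?f (l + j)" "0 < ?f j" if "j \<in> {1..n}" for j
  proof -
    have "1 \<le> M - l - j" "M - l - j \<le> N" "1 \<le> l + j" "l + j \<le> N" "1 \<le> j" "j \<le> N"
      using that A assms(2) by auto
    then show "0 < ?f (M - l - j)" "0 < ?f (l + j)" "0 < ?f j" by (auto intro: norm_q_pos simp del: norm_le_zero_iff zero_less_norm_iff)
  qed
  have "cM M n l (qN N) = (\<Prod>j=1..n. ?f (M - l - j) * ?f (l + j) / ?f j)"
    unfolding cM_def by (simp add: norm_mult norm_divide)
  then have "ln (cM M n l (qN N)) = (\<Sum>j=1..n. ln (?f (M - l - j) * ?f (l + j) / ?f j))"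
  proof (simp only:)
    show "ln (\<Prod>j=1..n. ?f (M - l - j) * ?f (l + j) / ?f j) = (\<Sum>j=1..n. ln (?f (M - l - j) * ?f (l + j) / ?f j))"
    proof (rule ln_prod)
      fix j assume j: "j \<in> {1..n}"
      have "0 < ?f (M - l - j) * ?f (l + j) / ?f j" using pos[OF j] by simp
      then show "?f (M - l - j) * ?f (l + j) / ?f j \<noteq> 0" by linarith
    qed simp
  qed
  also have "\<dots> = (\<Sum>j=1..n. gg (real (M - l - j) * hh N) + gg (real (l + j) * hh N) - gg (real j * hh N))"
  proof (rule sum.cong[OF refl])
    fix j assume j: "j \<in> {1..n}"
    have "ln (?f (M - l - j) * ?f (l + j) / ?f j) = ln (?f (M - l - j)) + ln (?f (l + j)) - ln (?f j)"
      using pos[OF j] by (simp add: ln_mult ln_div)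
    then show "ln (?f (M - l - j) * ?f (l + j) / ?f j) = gg (real (M - l - j) * hh N) + gg (real (l + j) * hh N) - gg (real j * hh N)"
      by (simp only: ln_norm_q)
  qed
  also have "\<dots> = (\<Sum>j=1..n. gg (real (M - l - j) * hh N)) + (\<Sum>j=1..n. gg (real (l + j) * hh N)) - (\<Sum>j=1..n. gg (real j * hh N))"
    by (simp add: sum.distrib sum_subtractf)
  also have "(\<Sum>j=1..n. gg (real (M - l - j) * hh N)) = PP N (M-l-1) - PP N (M-l-1-n)"
  proof -
    have r: "(\<Sum>j=1..n. (\<lambda>k. gg (real k * hh N)) ((M - l) - j)) = PP N (M-l-1) - PP N (M-l-1-n)"
      unfolding PP_def using A by (subst sum_rev_idx) auto
    then show ?thesis by (simp add: diff_diff_left)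
  qed
  also have "(\<Sum>j=1..n. gg (real (l + j) * hh N)) = PP N (l+n) - PP N l"
    unfolding PP_def by (rule sum_shift_idx[where f = "\<lambda>k. gg (real k * hh N)"])
  also have "(\<Sum>j=1..n. gg (real j * hh N)) = PP N n" by (simp add: PP_def)
  finally show ?thesis .
qed



lemma grid_in01: "k \<le> N \<Longrightarrow> real k * hh N \<in> {0..1}"
  using grid_lt1[of k N] hh_pos[of N] by auto

lemma lim01: assumes "(f \<longlongrightarrow> x) sequentially" "eventually (\<lambda>N. f N \<in> {0..1::real}) sequentially"
  shows "x \<in> {0..1}"
  by (rule Lim_in_closed_set[OF closed_atLeastAtMost assms(2) _ assms(1)]) simp

lemma GG_lim: assumes "(f \<longlongrightarrow> x) sequentially" "eventually (\<lambda>N. f N \<in> {0..1::real}) sequentially"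
  shows "((\<lambda>N. GG (f N)) \<longlongrightarrow> GG x) sequentially"
  by (rule continuous_on_tendsto_compose[OF GG_cont assms(1) lim01[OF assms] assms(2)])

theorem lemma4p1:
  fixes M n l :: "nat \<Rightarrow> nat" and s ns ls :: real
  assumes "eventually (\<lambda>N. 1 \<le> M N \<and> M N \<le> N) sequentially"
    and "eventually (\<lambda>N. admissible (M N) (n N) (l N) \<and>
           (\<forall>a b. admissible (M N) a b \<longrightarrow>
              cM (M N) a b (qN N) \<le> cM (M N) (n N) (l N) (qN N))) sequentially"
    and "s \<in> {0..1}"
    and "(\<lambda>N. real (M N) / (real N + 1/2)) \<longlonglongrightarrow> s"
    and "(\<lambda>N. real (n N) / (real N + 1/2)) \<longlonglongrightarrow> ns"
    and "(\<lambda>N. real (l N) / (real N + 1/2)) \<longlonglongrightarrow> ls"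
  shows "\<exists>L. (\<lambda>N. ln (cM (M N) (n N) (l N) (qN N)) / (real N + 1/2)) \<longlonglongrightarrow> L
           \<and> L \<le> vol_WL / (2 * pi)
           \<and> (L = vol_WL / (2 * pi) \<longleftrightarrow> s = 1 \<and> ns = 1/2 \<and> ls = 1/4)"
proof -
  have ev: "eventually (\<lambda>N. 2 \<le> N \<and> M N \<le> N \<and> admissible (M N) (n N) (l N)) sequentially"
    using assms(1) assms(2) eventually_ge_at_top[of "2::nat"]
    by eventually_elim auto
  have ev2: "eventually (\<lambda>N. 2 \<le> N \<and> M N \<le> N \<and> l N + n N + 1 \<le> M N \<and> 1 \<le> n N \<and> 1 \<le> l N) sequentially"
    using ev by eventually_elim (auto simp: admissible_def)
  define a1 where "a1 N = M N - l N - 1 - n N" for N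
  define b1 where "b1 N = M N - l N - 1" for N
  define X where "X N = ln (cM (M N) (n N) (l N) (qN N)) / (real N + 1/2)" for N
  define E where "E N = TT N (b1 N) - TT N (a1 N) + (TT N (l N + n N) - TT N (l N)) - TT N (n N)" for N
  define Y where "Y N = GG (real (b1 N) * hh N) - GG (real (a1 N) * hh N) + GG (real (l N + n N) * hh N)
      - GG (real (l N) * hh N) - GG (real (n N) * hh N)" for N
  have XEY: "eventually (\<lambda>N. E N + Y N = X N) sequentially"
    using ev
  proof eventually_elim
    case (elim N)
    have hP: "hh N * PP N k = TT N k + GG (real k * hh N)" for k by (simp add: TT_def)
    have "X N = hh N * ln (cM (M N) (n N) (l N) (qN N))" by (simp add: X_def hh_def)
    also have "\<dots> = hh N * ((PP N (b1 N) - PP N (a1 N)) + (PP N (l N + n N) - PP N (l N)) - PP N (n N))"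
      using ln_cM[of "M N" "n N" "l N" N] elim by (simp add: a1_def b1_def)
    also have "\<dots> = E N + Y N" by (simp add: algebra_simps hP E_def Y_def)
    finally show ?case by simp
  qed
  have E0: "E \<longlonglongrightarrow> 0"
  proof (rule Lim_null_comparison)
    show "eventually (\<lambda>N. norm (E N) \<le> 5 * eta N) sequentially"
      using ev2
    proof eventually_elim
      case (elim N)
      have "\<bar>TT N k\<bar> \<le> eta N" if "k \<le> N" for k
        using TT_bound[of N k] elim that by (simp add: eta_def)
      moreover have "b1 N \<le> N" "a1 N \<le> N" "l N + n N \<le> N" "l N \<le> N" "n N \<le> N"
        using elim by (auto simp: a1_def b1_def)
      ultimately have "\<bar>TT N (b1 N)\<bar> \<le> eta N" "\<bar>TT N (a1 N)\<bar> \<le> eta N" "\<bar>TT N (l N + n N)\<bar> \<le> eta N"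
        "\<bar>TT N (l N)\<bar> \<le> eta N" "\<bar>TT N (n N)\<bar> \<le> eta N" by blast+
      then show ?case unfolding E_def real_norm_def by linarith
    qed
    show "(\<lambda>N. 5 * eta N) \<longlonglongrightarrow> 0" using tendsto_mult_right_zero[OF eta_lim, of 5] by (simp add: mult.commute)
  qed
  have hM: "(\<lambda>N. real (M N) * hh N) \<longlonglongrightarrow> s" using assms(4) by (simp add: hh_def)
  have hn: "(\<lambda>N. real (n N) * hh N) \<longlonglongrightarrow> ns" using assms(5) by (simp add: hh_def)
  have hl: "(\<lambda>N. real (l N) * hh N) \<longlonglongrightarrow> ls" using assms(6) by (simp add: hh_def)
  have lb1: "(\<lambda>N. real (b1 N) * hh N) \<longlonglongrightarrow> s - ls"
  proof -
    have "(\<lambda>N. real (M N) * hh N - real (l N) * hh N - hh N) \<longlonglongrightarrow> s - ls - 0"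
      by (intro tendsto_diff hM hl hh_lim)
    moreover have "eventually (\<lambda>N. real (M N) * hh N - real (l N) * hh N - hh N = real (b1 N) * hh N) sequentially"
      using ev2 by eventually_elim (auto simp: b1_def of_nat_diff algebra_simps)
    ultimately show ?thesis by (simp add: tendsto_cong)
  qed
  have la1: "(\<lambda>N. real (a1 N) * hh N) \<longlonglongrightarrow> s - ls - ns"
  proof -
    have "(\<lambda>N. real (M N) * hh N - real (l N) * hh N - hh N - real (n N) * hh N) \<longlonglongrightarrow> s - ls - 0 - ns"
      by (intro tendsto_diff hM hl hh_lim hn)
    moreover have "eventually (\<lambda>N. real (M N) * hh N - real (l N) * hh N - hh N - real (n N) * hh N = real (a1 N) * hh N) sequentially"
      using ev2 by eventually_elim (auto simp: a1_def of_nat_diff algebra_simps)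
    ultimately show ?thesis by (simp add: tendsto_cong)
  qed
  have lln: "(\<lambda>N. real (l N + n N) * hh N) \<longlonglongrightarrow> ls + ns"
    using tendsto_add[OF hl hn] by (simp add: algebra_simps)
  have in01: "eventually (\<lambda>N. real (b1 N) * hh N \<in> {0..1} \<and> real (a1 N) * hh N \<in> {0..1}
     \<and> real (l N + n N) * hh N \<in> {0..1} \<and> real (l N) * hh N \<in> {0..1} \<and> real (n N) * hh N \<in> {0..1}) sequentially"
    using ev2
  proof eventually_elim
    case (elim N)
    then have "b1 N \<le> N" "a1 N \<le> N" "l N + n N \<le> N" "l N \<le> N" "n N \<le> N"
      by (auto simp: a1_def b1_def)
    then show ?case by (intro conjI grid_in01)
  qed
  have i1: "eventually (\<lambda>N. real (b1 N) * hh N \<in> {0..1}) sequentially" using in01 by (rule eventually_mono) auto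
  have i2: "eventually (\<lambda>N. real (a1 N) * hh N \<in> {0..1}) sequentially" using in01 by (rule eventually_mono) auto
  have i3: "eventually (\<lambda>N. real (l N + n N) * hh N \<in> {0..1}) sequentially" using in01 by (rule eventually_mono) auto
  have i4: "eventually (\<lambda>N. real (l N) * hh N \<in> {0..1}) sequentially" using in01 by (rule eventually_mono) auto
  have i5: "eventually (\<lambda>N. real (n N) * hh N \<in> {0..1}) sequentially" using in01 by (rule eventually_mono) auto
  define u where "u = s - ls - ns"
  define L where "L = GG (s - ls) - GG u + GG (ls + ns) - GG ls - GG ns"
  have YL: "Y \<longlonglongrightarrow> L"
    unfolding Y_def[abs_def] L_def u_def
    by (intro tendsto_diff tendsto_add GG_lim lb1 la1 lln hl hn i1 i2 i3 i4 i5)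
  have XL: "X \<longlonglongrightarrow> L"
  proof -
    have "(\<lambda>N. E N + Y N) \<longlonglongrightarrow> 0 + L" by (intro tendsto_add E0 YL)
    then show ?thesis using XEY by (simp add: tendsto_cong)
  qed
  have u0: "0 \<le> u" using lim01[OF la1 i2] by (simp add: u_def)
  have n0: "0 \<le> ns" using lim01[OF hn i5] by simp
  have l0: "0 \<le> ls" using lim01[OF hl i4] by simp
  have sum1: "u + ns + ls \<le> 1" using assms(3) by (simp add: u_def)
  have e1: "u + ns = s - ls" by (simp add: u_def)
  have e2: "ls + ns = ls + ns" ..
  have LF: "L = GG (u + ns) - GG u + GG (ls + ns) - GG ls - GG ns" by (simp add: L_def e1)
  note FB = F_bound[OF u0 n0 l0 sum1]
  show ?thesis
  proof (intro exI conjI)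
    show "(\<lambda>N. ln (cM (M N) (n N) (l N) (qN N)) / (real N + 1/2)) \<longlonglongrightarrow> L"
      using XL by (simp add: X_def[abs_def])
    show "L \<le> vol_WL / (2 * pi)" using FB(1) LF by simp
    show "L = vol_WL / (2 * pi) \<longleftrightarrow> s = 1 \<and> ns = 1/2 \<and> ls = 1/4"
      using FB(2) LF by (auto simp: u_def)
  qed
qed

end
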